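(* For every integer $k\ge 2$, the complete $k$-partite graph $K(2,2,\ldots,2)$ (with $k$ parts, each of size $2$) has Hall number $h(K(2,\ldots,2))=k$.
   Context: All graphs are finite and simple. A list assignment $L$ to a graph $G$ assigns a finite set $L(v)$ to each vertex $v$; a proper $L$-coloring is a map $\psi$ with $\psi(v)\in L(v)$ for all $v$ and $\psi(u)\ne\psi(v)$ for every edge $uv$. For a subgraph $H$ of $G$ and a color $\sigma$, let $H_\sigma$ denote the subgraph of $H$ induced by $\{v\in V(H):\sigma\in L(v)\}$, and let $\alpha$ denote the independence number (with $\alpha$ of the null graph equal to $0$). $G$ and $L$ satisfy Hall's condition if $\sum_{\sigma}\alpha(H_\sigma)\ge |V(H)|$ for every subgraph $H$ of $G$, the sum being over all colors. The Hall number $h(G)$ is the smallest positive integer $k$ such that $G$ has a proper $L$-coloring whenever $G$ and $L$ satisfy Hall's condition and $|L(v)|\ge k$ for every $v\in V(G)$. *)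

theory Defs
  imports Main
begin

text \<open>A finite simple graph is given by a vertex set V and a symmetric irreflexive
edge relation E on V.  Colours are natural numbers (any finite list assignment
can be relabelled into nat).\<close>

definition simple_graph :: "'a set \<Rightarrow> ('a \<Rightarrow> 'a \<Rightarrow> bool) \<Rightarrow> bool" where
  "simple_graph V E \<longleftrightarrow> finite V \<and> (\<forall>u v. E u v \<longrightarrow> u \<in> V \<and> v \<in> V \<and> u \<noteq> v \<and> E v u)"

definition is_subgraph :: "'a set \<Rightarrow> ('a \<Rightarrow> 'a \<Rightarrow> bool) \<Rightarrow> 'a set \<Rightarrow> ('a \<Rightarrow> 'a \<Rightarrow> bool) \<Rightarrow> bool" where
  "is_subgraph W F V E \<longleftrightarrow> W \<subseteq> V \<and> (\<forall>u v. F u v \<longrightarrow> u \<in> W \<and> v \<in> W \<and> E u v \<and> F v u)"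

definition independent_set :: "'a set \<Rightarrow> ('a \<Rightarrow> 'a \<Rightarrow> bool) \<Rightarrow> 'a set \<Rightarrow> bool" where
  "independent_set W F S \<longleftrightarrow> S \<subseteq> W \<and> (\<forall>u\<in>S. \<forall>v\<in>S. \<not> F u v)"

text \<open>Independence number of the graph (W,F); for the null graph it is 0.\<close>
definition indep_number :: "'a set \<Rightarrow> ('a \<Rightarrow> 'a \<Rightarrow> bool) \<Rightarrow> nat" where
  "indep_number W F = Max (card ` {S. independent_set W F S})"

text \<open>Colours not in any list
  of a vertex of H contribute \<alpha>(null graph) = 0, so the sum is taken over the colours
  occurring in the lists of vertices of H.\<close>
definition hall_condition :: "'a set \<Rightarrow> ('a \<Rightarrow> 'a \<Rightarrow> bool) \<Rightarrow> ('a \<Rightarrow> nat set) \<Rightarrow> bool" where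
  "hall_condition V E L \<longleftrightarrow>
     (\<forall>W F. is_subgraph W F V E \<longrightarrow>
        card W \<le> (\<Sum>\<sigma>\<in>(\<Union>v\<in>W. L v). indep_number {v\<in>W. \<sigma> \<in> L v} F))"

definition proper_L_coloring :: "'a set \<Rightarrow> ('a \<Rightarrow> 'a \<Rightarrow> bool) \<Rightarrow> ('a \<Rightarrow> nat set) \<Rightarrow> ('a \<Rightarrow> nat) \<Rightarrow> bool" where
  "proper_L_coloring V E L \<psi> \<longleftrightarrow> (\<forall>v\<in>V. \<psi> v \<in> L v) \<and> (\<forall>u v. E u v \<longrightarrow> \<psi> u \<noteq> \<psi> v)"

definition hall_good :: "'a set \<Rightarrow> ('a \<Rightarrow> 'a \<Rightarrow> bool) \<Rightarrow> nat \<Rightarrow> bool" where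
  "hall_good V E k \<longleftrightarrow>
     (\<forall>L. (\<forall>v\<in>V. finite (L v)) \<longrightarrow> hall_condition V E L \<longrightarrow> (\<forall>v\<in>V. k \<le> card (L v))
          \<longrightarrow> (\<exists>\<psi>. proper_L_coloring V E L \<psi>))"

definition hall_number :: "'a set \<Rightarrow> ('a \<Rightarrow> 'a \<Rightarrow> bool) \<Rightarrow> nat" where
  "hall_number V E = (LEAST k. 0 < k \<and> hall_good V E k)"

definition K2_verts :: "nat \<Rightarrow> (nat \<times> nat) set" where
  "K2_verts k = {0..<k} \<times> {0, 1}"

definition K2_edges :: "nat \<Rightarrow> (nat \<times> nat) \<Rightarrow> (nat \<times> nat) \<Rightarrow> bool" where
  "K2_edges k x y \<longleftrightarrow> x \<in> K2_verts k \<and> y \<in> K2_verts k \<and> fst x \<noteq> fst y"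

end

theory Submission
  imports Defs
begin


lemma marriage:
  fixes A :: "'i \<Rightarrow> 'c set"
  assumes "finite I" "\<forall>i\<in>I. finite (A i)" "\<forall>J\<subseteq>I. card J \<le> card (\<Union>(A ` J))"
  shows "\<exists>f. inj_on f I \<and> (\<forall>i\<in>I. f i \<in> A i)"
  using assms
proof (induction "card I" arbitrary: I A rule: less_induct)
  case less
  note fin = less.prems(1) and finA = less.prems(2) and hall = less.prems(3)
  show ?case
  proof (cases "I = {}")
    case True then show ?thesis by auto
  next
    case Ine: False
    show ?thesis
    proof (cases "\<forall>J. J \<subseteq> I \<and> J \<noteq> {} \<and> J \<noteq> I \<longrightarrow> card J < card (\<Union>(A ` J))")
      case True
      obtain i0 where i0: "i0 \<in> I" using Ine by auto
      have "card {i0} \<le> card (A i0)" using hall i0 by (metis empty_subsetI insert_subset ccpo_Sup_singleton image_empty image_insert)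
      hence "A i0 \<noteq> {}" by auto
      then obtain x where x: "x \<in> A i0" by auto
      define I' where "I' = I - {i0}"
      define A' where "A' = (\<lambda>i. A i - {x})"
      have "\<exists>f. inj_on f I' \<and> (\<forall>i\<in>I'. f i \<in> A' i)"
      proof (rule less.hyps)
        show "card I' < card I" unfolding I'_def using fin i0 by (metis card_Diff1_less)
        show "finite I'" using fin I'_def by auto
        show "\<forall>i\<in>I'. finite (A' i)" using finA I'_def A'_def by auto
        show "\<forall>J\<subseteq>I'. card J \<le> card (\<Union>(A' ` J))"
        proof (intro allI impI)
          fix J assume J: "J \<subseteq> I'"
          show "card J \<le> card (\<Union>(A' ` J))"
          proof (cases "J = {}")
            case True then show ?thesis by simp
          next
            case False
            have "J \<noteq> I" using J i0 I'_def by auto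
            moreover have "J \<subseteq> I" using J I'_def by auto
            ultimately have lt: "card J < card (\<Union>(A ` J))" using True False by blast
            have eq: "\<Union>(A' ` J) = \<Union>(A ` J) - {x}" unfolding A'_def by auto
            have "card (\<Union>(A ` J)) - 1 \<le> card (\<Union>(A ` J) - {x})"
              by (simp add: card_Diff_singleton_if)
            then show ?thesis using lt eq by simp
          qed
        qed
      qed
      then obtain f where f: "inj_on f I'" "\<forall>i\<in>I'. f i \<in> A' i" by auto
      define g where "g = f(i0 := x)"
      have "inj_on g I"
      proof -
        have "inj_on g I'" using f(1) unfolding g_def I'_def inj_on_def by auto
        moreover have "g i0 \<notin> g ` I'" using f(2) unfolding g_def A'_def I'_def by auto
        moreover have "I = insert i0 I'" using i0 I'_def by auto
        ultimately show ?thesis by auto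
      qed
      moreover have "\<forall>i\<in>I. g i \<in> A i" using f(2) x unfolding g_def A'_def I'_def by auto
      ultimately show ?thesis by blast
    next
      case False
      then obtain J where J: "J \<subseteq> I" "J \<noteq> {}" "J \<noteq> I" "card (\<Union>(A ` J)) \<le> card J"
        by (auto simp: not_less)
      have finJ: "finite J" using J fin finite_subset by auto
      have "card J < card I" using J fin by (simp add: psubset_card_mono psubsetI)
      then obtain g where g: "inj_on g J" "\<forall>i\<in>J. g i \<in> A i"
        using less.hyps[of J A] finJ finA hall J by auto
      define UJ where "UJ = \<Union>(A ` J)"
      have finUJ: "finite UJ" using finJ finA J UJ_def by auto
      have cUJ: "card UJ = card J" using J hall UJ_def by (simp add: le_antisym)
      define A'' where "A'' = (\<lambda>i. A i - UJ)"
      have "card (I - J) < card I"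
      proof -
        have "card (I - J) = card I - card J" using finJ J(1) by (simp add: card_Diff_subset)
        moreover have "0 < card J" using finJ J(2) card_gt_0_iff by blast
        moreover have "card J \<le> card I" using J(1) fin card_mono by blast
        ultimately show ?thesis by simp
      qed
      moreover have "\<forall>K\<subseteq>I - J. card K \<le> card (\<Union>(A'' ` K))"
      proof (intro allI impI)
        fix K assume K: "K \<subseteq> I - J"
        have finK: "finite K" using K fin finite_subset by blast
        have eq: "\<Union>(A'' ` K) = \<Union>(A ` (K \<union> J)) - UJ" unfolding A''_def UJ_def by auto
        have sub: "UJ \<subseteq> \<Union>(A ` (K \<union> J))" unfolding UJ_def by auto
        have "card (\<Union>(A'' ` K)) = card (\<Union>(A ` (K \<union> J))) - card UJ"
          using eq sub finUJ by (simp add: card_Diff_subset)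
        moreover have "card (K \<union> J) \<le> card (\<Union>(A ` (K \<union> J)))" using hall K J by (metis Diff_subset Un_subset_iff subset_trans)
        moreover have "card (K \<union> J) = card K + card J" using K finK finJ
          by (subst card_Un_disjoint) auto
        ultimately show "card K \<le> card (\<Union>(A'' ` K))" using cUJ by simp
      qed
      ultimately obtain h where h: "inj_on h (I - J)" "\<forall>i\<in>I - J. h i \<in> A'' i"
        using less.hyps[of "I - J" A''] fin finA A''_def by auto
      define f where "f = (\<lambda>i. if i \<in> J then g i else h i)"
      have "inj_on f I"
        unfolding inj_on_def
      proof (intro ballI impI)
        fix a b assume ab: "a \<in> I" "b \<in> I" "f a = f b"
        show "a = b"
        proof (cases "a \<in> J"; cases "b \<in> J")
          assume "a \<in> J" "b \<in> J" then show ?thesis using ab g(1) f_def inj_on_def by metis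
        next
          assume "a \<in> J" "b \<notin> J"
          then have "f a \<in> UJ" "f b \<notin> UJ" using g(2) h(2) ab f_def UJ_def A''_def by auto
          then show ?thesis using ab by simp
        next
          assume "a \<notin> J" "b \<in> J"
          then have "f b \<in> UJ" using g(2) f_def UJ_def by auto
          moreover have "f a \<notin> UJ" using h(2) ab(1) \<open>a \<notin> J\<close> f_def A''_def by auto
          ultimately show ?thesis using ab by simp
        next
          assume "a \<notin> J" "b \<notin> J"
          then have "h a = h b" "a \<in> I - J" "b \<in> I - J" using ab f_def by auto
          then show ?thesis using h(1) by (meson inj_onD)
        qed
      qed
      moreover have "\<forall>i\<in>I. f i \<in> A i" using g(2) h(2) f_def A''_def by auto
      ultimately show ?thesis by blast
    qed
  qed
qed



lemma ert:
  fixes P :: "nat set" and L :: "nat \<times> nat \<Rightarrow> nat set"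
  assumes "finite P" "\<forall>v\<in>P \<times> {0::nat,1}. finite (L v) \<and> card P \<le> card (L v)"
  shows "\<exists>\<psi>. (\<forall>v\<in>P \<times> {0::nat,1}. \<psi> v \<in> L v) \<and>
             (\<forall>u\<in>P \<times> {0::nat,1}. \<forall>w\<in>P \<times> {0::nat,1}. fst u \<noteq> fst w \<longrightarrow> \<psi> u \<noteq> \<psi> w)"
  using assms
proof (induction "card P" arbitrary: P L rule: less_induct)
  case less
  note finP = less.prems(1) and LP = less.prems(2)
  show ?case
  proof (cases "\<exists>i\<in>P. L (i,0) \<inter> L (i,1) \<noteq> {}")
    case True
    then obtain i c where i: "i \<in> P" and c: "c \<in> L (i,0)" "c \<in> L (i,1)" by auto
    define P' where "P' = P - {i}"
    define L' where "L' = (\<lambda>v. L v - {c})"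
    have cP': "card P' = card P - 1" using i finP P'_def by simp
    have "\<exists>\<psi>. (\<forall>v\<in>P' \<times> {0::nat,1}. \<psi> v \<in> L' v) \<and>
             (\<forall>u\<in>P' \<times> {0::nat,1}. \<forall>w\<in>P' \<times> {0::nat,1}. fst u \<noteq> fst w \<longrightarrow> \<psi> u \<noteq> \<psi> w)"
    proof (rule less.hyps)
      show "card P' < card P" unfolding P'_def using finP i by (metis card_Diff1_less)
      show "finite P'" using finP P'_def by auto
      show "\<forall>v\<in>P' \<times> {0::nat,1}. finite (L' v) \<and> card P' \<le> card (L' v)"
      proof
        fix v assume v: "v \<in> P' \<times> {0::nat,1}"
        then have v': "v \<in> P \<times> {0::nat,1}" using P'_def by auto
        have "card (L v) - 1 \<le> card (L' v)" unfolding L'_def by (simp add: card_Diff_singleton_if)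
        then show "finite (L' v) \<and> card P' \<le> card (L' v)" using LP v' cP' L'_def by fastforce
      qed
    qed
    then obtain \<psi> where \<psi>: "\<forall>v\<in>P' \<times> {0::nat,1}. \<psi> v \<in> L' v"
      "\<forall>u\<in>P' \<times> {0::nat,1}. \<forall>w\<in>P' \<times> {0::nat,1}. fst u \<noteq> fst w \<longrightarrow> \<psi> u \<noteq> \<psi> w" by blast
    define \<phi> where "\<phi> = (\<lambda>v. if fst v = i then c else \<psi> v)"
    have "\<forall>v\<in>P \<times> {0::nat,1}. \<phi> v \<in> L v"
    proof
      fix v assume v: "v \<in> P \<times> {0::nat,1}"
      show "\<phi> v \<in> L v"
      proof (cases "fst v = i")
        case True
        then have "v = (i,0) \<or> v = (i,1)" using v by auto
        then show ?thesis using c True \<phi>_def by auto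
      next
        case False
        then have "v \<in> P' \<times> {0::nat,1}" using v P'_def by auto
        then show ?thesis using \<psi>(1) False \<phi>_def L'_def by auto
      qed
    qed
    moreover have "\<forall>u\<in>P \<times> {0::nat,1}. \<forall>w\<in>P \<times> {0::nat,1}. fst u \<noteq> fst w \<longrightarrow> \<phi> u \<noteq> \<phi> w"
    proof (intro ballI impI)
      fix u w assume u: "u \<in> P \<times> {0::nat,1}" and w: "w \<in> P \<times> {0::nat,1}" and uw: "fst u \<noteq> fst w"
      show "\<phi> u \<noteq> \<phi> w"
      proof (cases "fst u = i")
        case True
        then have "w \<in> P' \<times> {0::nat,1}" using w uw P'_def by auto
        then have "\<psi> w \<noteq> c" using \<psi>(1) L'_def by auto
        then show ?thesis using True uw \<phi>_def by auto
      next
        case False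
        then have u': "u \<in> P' \<times> {0::nat,1}" using u P'_def by auto
        then have "\<psi> u \<noteq> c" using \<psi>(1) L'_def by auto
        show ?thesis
        proof (cases "fst w = i")
          case True
          then show ?thesis using False \<open>\<psi> u \<noteq> c\<close> \<phi>_def by auto
        next
          case False2: False
          then have "w \<in> P' \<times> {0::nat,1}" using w P'_def by auto
          then show ?thesis using \<psi>(2) u' uw False False2 \<phi>_def by auto
        qed
      qed
    qed
    ultimately show ?thesis by blast
  next
    case False
    define I where "I = P \<times> {0::nat,1}"
    have finI: "finite I" using finP I_def by auto
    have cI: "card I = 2 * card P" using finP I_def by (simp add: card_cartesian_product)
    have "\<exists>f. inj_on f I \<and> (\<forall>i\<in>I. f i \<in> L i)"
    proof (rule marriage)
      show "finite I" by (rule finI)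
      show "\<forall>i\<in>I. finite (L i)" using LP I_def by auto
      show "\<forall>J\<subseteq>I. card J \<le> card (\<Union>(L ` J))"
      proof (intro allI impI)
        fix J assume J: "J \<subseteq> I"
        have finJ: "finite J" using J finI finite_subset by blast
        have finU: "finite (\<Union>(L ` J))" using finJ J LP I_def by auto
        show "card J \<le> card (\<Union>(L ` J))"
        proof (cases "\<exists>i. (i,0) \<in> J \<and> (i,1) \<in> J")
          case True
          then obtain i where i: "(i,0) \<in> J" "(i,1) \<in> J" by auto
          have iP: "i \<in> P" using i J I_def by auto
          have disj: "L (i,0) \<inter> L (i,1) = {}" using False iP by auto
          have "card (L (i,0) \<union> L (i,1)) = card (L (i,0)) + card (L (i,1))"
            using disj LP iP by (simp add: card_Un_disjoint)
          moreover have "card P \<le> card (L (i,0))" "card P \<le> card (L (i,1))" using LP iP by auto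
          moreover have "card (L (i,0) \<union> L (i,1)) \<le> card (\<Union>(L ` J))"
            using i finU by (intro card_mono) auto
          moreover have "card J \<le> card I" using J finI card_mono by blast
          ultimately show ?thesis using cI by linarith
        next
          case False
          have "inj_on fst J"
          proof (rule inj_onI)
            fix a b assume ab: "a \<in> J" "b \<in> J" "fst a = fst b"
            obtain a1 a2 where a: "a = (a1,a2)" by (cases a)
            obtain b1 b2 where b: "b = (b1,b2)" by (cases b)
            have "a2 \<in> {0::nat,1}" "b2 \<in> {0::nat,1}" using ab J I_def a b by auto
            then show "a = b" using ab False a b by auto
          qed
          then have "card J = card (fst ` J)" by (simp add: card_image)
          also have "\<dots> \<le> card P" using J I_def finP by (intro card_mono) auto
          finally have cJ: "card J \<le> card P" .
          show ?thesis
          proof (cases "J = {}")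
            case True then show ?thesis by simp
          next
            case False
            then obtain j where j: "j \<in> J" by auto
            then have "card P \<le> card (L j)" using LP J I_def by auto
            also have "\<dots> \<le> card (\<Union>(L ` J))" using j finU by (intro card_mono) auto
            finally show ?thesis using cJ by simp
          qed
        qed
      qed
    qed
    then obtain f where f: "inj_on f I" "\<forall>i\<in>I. f i \<in> L i" by blast
    have "\<forall>u\<in>P \<times> {0::nat,1}. \<forall>w\<in>P \<times> {0::nat,1}. fst u \<noteq> fst w \<longrightarrow> f u \<noteq> f w"
      using f(1) I_def unfolding inj_on_def by auto
    then show ?thesis using f(2) I_def by blast
  qed
qed



lemma indep_ge:
  assumes "finite W" "independent_set W F S"
  shows "card S \<le> indep_number W F"
proof -
  have "{S. independent_set W F S} \<subseteq> Pow W" unfolding independent_set_def by auto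
  then have "finite {S. independent_set W F S}" using assms(1) finite_subset by blast
  then show ?thesis unfolding indep_number_def using assms(2) by (intro Max_ge) auto
qed

lemma hall_from_crit:
  assumes finV: "finite V"
    and crit: "\<forall>x\<in>V. \<exists>\<psi>. (\<forall>w\<in>V-{x}. \<psi> w \<in> L w) \<and>
                 (\<forall>u w. u \<in> V-{x} \<longrightarrow> w \<in> V-{x} \<longrightarrow> E u w \<longrightarrow> \<psi> u \<noteq> \<psi> w)"
    and full: "\<forall>F. is_subgraph V F V E \<longrightarrow>
                 card V \<le> (\<Sum>\<sigma>\<in>(\<Union>v\<in>V. L v). indep_number {v\<in>V. \<sigma> \<in> L v} F)"
    and finL: "\<forall>v\<in>V. finite (L v)"
  shows "hall_condition V E L"
  unfolding hall_condition_def
proof (intro allI impI)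
  fix W F assume sub: "is_subgraph W F V E"
  then have WV: "W \<subseteq> V" unfolding is_subgraph_def by auto
  show "card W \<le> (\<Sum>\<sigma>\<in>(\<Union>v\<in>W. L v). indep_number {v\<in>W. \<sigma> \<in> L v} F)"
  proof (cases "W = V")
    case True then show ?thesis using full sub by auto
  next
    case False
    then obtain x where x: "x \<in> V" "x \<notin> W" using WV by auto
    obtain \<psi> where \<psi>: "\<forall>w\<in>V-{x}. \<psi> w \<in> L w"
      "\<forall>u w. u \<in> V-{x} \<longrightarrow> w \<in> V-{x} \<longrightarrow> E u w \<longrightarrow> \<psi> u \<noteq> \<psi> w"
      using crit x(1) by blast
    have finW: "finite W" using WV finV finite_subset by blast
    define S where "S = (\<Union>v\<in>W. L v)"
    have finS: "finite S" using finW finL WV S_def by auto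
    have img: "\<psi> ` W \<subseteq> S" using \<psi>(1) x WV S_def by fastforce
    have "card W = (\<Sum>w\<in>W. (1::nat))" by simp
    also have "\<dots> = (\<Sum>\<sigma>\<in>S. \<Sum>w\<in>{w\<in>W. \<psi> w = \<sigma>}. 1)"
      using sum.group[OF finW finS img, of "\<lambda>_. 1::nat"] by simp
    also have "\<dots> = (\<Sum>\<sigma>\<in>S. card {w\<in>W. \<psi> w = \<sigma>})" by simp
    also have "\<dots> \<le> (\<Sum>\<sigma>\<in>S. indep_number {v\<in>W. \<sigma> \<in> L v} F)"
    proof (rule sum_mono)
      fix \<sigma> assume "\<sigma> \<in> S"
      have "independent_set {v\<in>W. \<sigma> \<in> L v} F {w\<in>W. \<psi> w = \<sigma>}"
        unfolding independent_set_def
      proof (intro conjI ballI)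
        show "{w \<in> W. \<psi> w = \<sigma>} \<subseteq> {v \<in> W. \<sigma> \<in> L v}" using \<psi>(1) x WV by fastforce
      next
        fix u v assume "u \<in> {w \<in> W. \<psi> w = \<sigma>}" "v \<in> {w \<in> W. \<psi> w = \<sigma>}"
        then show "\<not> F u v" using sub \<psi>(2) x WV unfolding is_subgraph_def by blast
      qed
      then show "card {w\<in>W. \<psi> w = \<sigma>} \<le> indep_number {v\<in>W. \<sigma> \<in> L v} F"
        using finW by (intro indep_ge) auto
    qed
    finally show ?thesis unfolding S_def .
  qed
qed

definition LB :: "nat \<Rightarrow> nat \<times> nat \<Rightarrow> nat set" where
  "LB k v = (if fst v < k - 1 then (if snd v = 0 then {..k-2} else {..k} - {k-2})
             else (if snd v = 0 then {..k-1} else {..k} - {k-1}))"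

lemma LB_noncol:
  assumes k: "2 \<le> k" and pc: "proper_L_coloring (K2_verts k) (K2_edges k) (LB k) \<psi>"
  shows False
proof -
  have mem: "\<And>v. v \<in> K2_verts k \<Longrightarrow> \<psi> v \<in> LB k v" using pc unfolding proper_L_coloring_def by auto
  have edge: "\<And>u v. u \<in> K2_verts k \<Longrightarrow> v \<in> K2_verts k \<Longrightarrow> fst u \<noteq> fst v \<Longrightarrow> \<psi> u \<noteq> \<psi> v"
    using pc unfolding proper_L_coloring_def K2_edges_def by auto
  define P where "P = {0..<k-1}"
  define f where "f = (\<lambda>i. \<psi> (i,0))"
  have inP: "\<And>i. i \<in> P \<Longrightarrow> (i,0) \<in> K2_verts k \<and> (i,1) \<in> K2_verts k" unfolding P_def K2_verts_def by auto
  have "inj_on f P"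
    by (rule inj_onI) (metis edge f_def fst_conv inP)
  moreover have "f ` P \<subseteq> {..k-2}"
  proof
    fix c assume "c \<in> f ` P"
    then obtain i where i: "i \<in> P" "c = \<psi> (i,0)" unfolding f_def by auto
    have "\<psi> (i,0) \<in> LB k (i,0)" using mem inP i(1) by blast
    moreover have "LB k (i,0) = {..k-2}" using i(1) by (simp add: LB_def P_def)
    ultimately show "c \<in> {..k-2}" using i(2) by simp
  qed
  moreover have "card P = card {..k-2}" using k unfolding P_def by simp
  ultimately have fP: "f ` P = {..k-2}" by (metis card_image card_subset_eq finite_atMost)
  have low: "\<And>v. v \<in> K2_verts k \<Longrightarrow> \<psi> v \<le> k-2 \<Longrightarrow> \<exists>i\<in>P. \<psi> v = \<psi> (i,0) \<and> fst v = i"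
  proof -
    fix v assume v: "v \<in> K2_verts k" "\<psi> v \<le> k-2"
    then have "\<psi> v \<in> f ` P" using fP by auto
    then obtain i where i: "i \<in> P" "\<psi> v = \<psi> (i,0)" unfolding f_def by auto
    then have "fst v = i" using edge[of v "(i,0)"] v inP by fastforce
    then show "\<exists>i\<in>P. \<psi> v = \<psi> (i,0) \<and> fst v = i" using i by auto
  qed
  have "k - 2 \<in> f ` P" using fP by auto
  then obtain j where j: "j \<in> P" "\<psi> (j,0) = k-2" unfolding f_def by auto
  have vj1: "(j,1) \<in> K2_verts k" using inP j by auto
  have lj1: "\<psi> (j,1) \<in> {..k} - {k-2}" using mem[OF vj1] j unfolding LB_def P_def by auto
  have j1: "\<psi> (j,1) = k-1 \<or> \<psi> (j,1) = k"
  proof (rule ccontr)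
    assume "\<not> ?thesis"
    then have "\<psi> (j,1) \<le> k-2" using lj1 by auto
    then obtain i where "i \<in> P" "\<psi> (j,1) = \<psi> (i,0)" "j = i" using low[OF vj1] by auto
    then show False using j lj1 by auto
  qed
  have v0: "(k-1,0) \<in> K2_verts k" and v1: "(k-1,1) \<in> K2_verts k" using k unfolding K2_verts_def by auto
  have notP: "k - 1 \<notin> P" unfolding P_def by auto
  have c0: "\<psi> (k-1,0) = k-1"
  proof -
    have l: "\<psi> (k-1,0) \<in> {..k-1}" using mem[OF v0] unfolding LB_def by auto
    have "\<not> \<psi> (k-1,0) \<le> k-2" using low[OF v0] notP by auto
    then show ?thesis using l by auto
  qed
  have c1: "\<psi> (k-1,1) = k"
  proof -
    have l: "\<psi> (k-1,1) \<in> {..k} - {k-1}" using mem[OF v1] unfolding LB_def by auto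
    have "\<not> \<psi> (k-1,1) \<le> k-2" using low[OF v1] notP by auto
    then show ?thesis using l k by auto
  qed
  have "j \<noteq> k - 1" using j notP by auto
  then show False using j1 c0 c1 edge[OF vj1 v0] edge[OF vj1 v1] by auto
qed



definition dcol :: "nat \<Rightarrow> nat \<Rightarrow> nat" where "dcol j i = (if i < j then i else i - 1)"

definition psiC :: "nat \<Rightarrow> nat \<Rightarrow> nat \<Rightarrow> nat \<Rightarrow> nat \<Rightarrow> nat \<Rightarrow> nat \<times> nat \<Rightarrow> nat" where
  "psiC k j a b c e v = (if fst v = k-1 then (if snd v = 0 then c else e)
     else if fst v = j then (if snd v = 0 then a else b) else dcol j (fst v))"

lemma LB_low: "2 \<le> k \<Longrightarrow> c < k - 2 \<Longrightarrow> c \<in> LB k v"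
  unfolding LB_def by auto

lemma gen_crit:
  assumes k: "2 \<le> k" and j: "j < k-1"
    and hm: "\<forall>w\<in>K2_verts k - {x}. fst w \<in> {j,k-1} \<longrightarrow> psiC k j a b c e w \<in> LB k w"
    and hd: "\<forall>u\<in>K2_verts k - {x}. \<forall>w\<in>K2_verts k - {x}. fst u = j \<longrightarrow> fst w = k-1 \<longrightarrow>
               psiC k j a b c e u \<noteq> psiC k j a b c e w"
    and hs: "\<forall>w\<in>K2_verts k - {x}. fst w \<in> {j,k-1} \<longrightarrow> k-2 \<le> psiC k j a b c e w"
  shows "\<exists>\<psi>. (\<forall>w\<in>K2_verts k - {x}. \<psi> w \<in> LB k w) \<and>
           (\<forall>u w. u \<in> K2_verts k - {x} \<longrightarrow> w \<in> K2_verts k - {x} \<longrightarrow> K2_edges k u w \<longrightarrow> \<psi> u \<noteq> \<psi> w)"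
proof (intro exI conjI)
  let ?\<psi> = "psiC k j a b c e"
  have other: "\<And>w. w \<in> K2_verts k \<Longrightarrow> fst w \<notin> {j,k-1} \<Longrightarrow> ?\<psi> w = dcol j (fst w) \<and> dcol j (fst w) < k-2"
  proof -
    fix w assume w: "w \<in> K2_verts k" "fst w \<notin> {j,k-1}"
    then have "fst w < k - 1" unfolding K2_verts_def by auto
    then show "?\<psi> w = dcol j (fst w) \<and> dcol j (fst w) < k-2"
      using w j unfolding psiC_def dcol_def by auto
  qed
  show "\<forall>w\<in>K2_verts k - {x}. ?\<psi> w \<in> LB k w"
  proof
    fix w assume w: "w \<in> K2_verts k - {x}"
    show "?\<psi> w \<in> LB k w"
    proof (cases "fst w \<in> {j,k-1}")
      case True then show ?thesis using hm w by blast
    next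
      case False then show ?thesis using other[of w] w LB_low[OF k] by auto
    qed
  qed
  show "\<forall>u w. u \<in> K2_verts k - {x} \<longrightarrow> w \<in> K2_verts k - {x} \<longrightarrow> K2_edges k u w \<longrightarrow> ?\<psi> u \<noteq> ?\<psi> w"
  proof (intro allI impI)
    fix u w assume u: "u \<in> K2_verts k - {x}" and w: "w \<in> K2_verts k - {x}" and e: "K2_edges k u w"
    have uw: "fst u \<noteq> fst w" using e unfolding K2_edges_def by auto
    show "?\<psi> u \<noteq> ?\<psi> w"
    proof (cases "fst u \<in> {j,k-1}"; cases "fst w \<in> {j,k-1}")
      assume a1: "fst u \<in> {j,k-1}" and a2: "fst w \<in> {j,k-1}"
      then show ?thesis
      proof (cases "fst u = j")
        case True
        then have "fst w = k-1" using a2 uw by auto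
        then show ?thesis using hd u w True by blast
      next
        case False
        then have "fst u = k-1" "fst w = j" using a1 a2 uw by auto
        then show ?thesis using hd u w by metis
      qed
    next
      assume "fst u \<in> {j,k-1}" "fst w \<notin> {j,k-1}"
      then show ?thesis using hs other[of w] u w by fastforce
    next
      assume "fst u \<notin> {j,k-1}" "fst w \<in> {j,k-1}"
      then show ?thesis using hs other[of u] u w by fastforce
    next
      assume a: "fst u \<notin> {j,k-1}" "fst w \<notin> {j,k-1}"
      then have "?\<psi> u = dcol j (fst u)" "?\<psi> w = dcol j (fst w)" using other u w by auto
      moreover have "dcol j (fst u) \<noteq> dcol j (fst w)" using a uw unfolding dcol_def by auto
      ultimately show ?thesis by simp
    qed
  qed
qed

lemma LB_crit:
  assumes k: "2 \<le> k"
  shows "\<forall>x\<in>K2_verts k. \<exists>\<psi>. (\<forall>w\<in>K2_verts k - {x}. \<psi> w \<in> LB k w) \<and>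
           (\<forall>u w. u \<in> K2_verts k - {x} \<longrightarrow> w \<in> K2_verts k - {x} \<longrightarrow> K2_edges k u w \<longrightarrow> \<psi> u \<noteq> \<psi> w)"
proof
  fix x assume x: "x \<in> K2_verts k"
  obtain i s where xs: "x = (i,s)" by (cases x)
  have iss: "i < k" "s = 0 \<or> s = 1" using x xs unfolding K2_verts_def by auto
  show "\<exists>\<psi>. (\<forall>w\<in>K2_verts k - {x}. \<psi> w \<in> LB k w) \<and>
           (\<forall>u w. u \<in> K2_verts k - {x} \<longrightarrow> w \<in> K2_verts k - {x} \<longrightarrow> K2_edges k u w \<longrightarrow> \<psi> u \<noteq> \<psi> w)"
  proof (cases "i = k-1")
    case True
    show ?thesis
    proof (cases "s = 0")
      case True
      show ?thesis
        by (rule gen_crit[where j=0 and a="k-2" and b="k-1" and c="k-1" and e=k])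
           (use k \<open>i = k-1\<close> True xs in \<open>auto simp: psiC_def LB_def K2_verts_def\<close>)
    next
      case False
      then have s1: "s = 1" using iss by auto
      show ?thesis
        by (rule gen_crit[where j=0 and a="k-2" and b="k" and c="k-1" and e=k])
           (use k \<open>i = k-1\<close> s1 xs in \<open>auto simp: psiC_def LB_def K2_verts_def\<close>)
    qed
  next
    case False
    then have ik: "i < k-1" using iss by auto
    show ?thesis
    proof (cases "s = 0")
      case True
      show ?thesis
        by (rule gen_crit[where j=i and a="k-2" and b="k-1" and c="k-2" and e="k-2"])
           (use k ik True xs in \<open>auto simp: psiC_def LB_def K2_verts_def\<close>)
    next
      case False
      then have s1: "s = 1" using iss by auto
      show ?thesis
        by (rule gen_crit[where j=i and a="k-2" and b="k" and c="k-1" and e=k])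
           (use k ik s1 xs in \<open>auto simp: psiC_def LB_def K2_verts_def\<close>)
    qed
  qed
qed



lemma LB_full:
  assumes k: "2 \<le> k"
  shows "\<forall>F. is_subgraph (K2_verts k) F (K2_verts k) (K2_edges k) \<longrightarrow>
     card (K2_verts k) \<le> (\<Sum>\<sigma>\<in>(\<Union>v\<in>K2_verts k. LB k v). indep_number {v\<in>K2_verts k. \<sigma> \<in> LB k v} F)"
proof (intro allI impI)
  fix F assume sub: "is_subgraph (K2_verts k) F (K2_verts k) (K2_edges k)"
  have U: "(\<Union>v\<in>K2_verts k. LB k v) = {..k}"
  proof
    show "(\<Union>v\<in>K2_verts k. LB k v) \<subseteq> {..k}" unfolding LB_def by auto
    show "{..k} \<subseteq> (\<Union>v\<in>K2_verts k. LB k v)"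
    proof
      fix \<sigma> assume s: "\<sigma> \<in> {..k}"
      have v0: "(k-1,0) \<in> K2_verts k" and v1: "(k-1,1) \<in> K2_verts k" using k unfolding K2_verts_def by auto
      show "\<sigma> \<in> (\<Union>v\<in>K2_verts k. LB k v)"
      proof (cases "\<sigma> = k-1")
        case True then show ?thesis using v0 unfolding LB_def by force
      next
        case False then have "\<sigma> \<in> LB k (k-1,1)" using s unfolding LB_def by auto
        then show ?thesis using v1 by blast
      qed
    qed
  qed
  define S :: "nat \<Rightarrow> (nat \<times> nat) set" where
    "S = (\<lambda>\<sigma>. if \<sigma> < k-2 then {(0,0),(0,1)} else if \<sigma> = k-2 then {(k-1,0),(k-1,1)}
             else if \<sigma> = k-1 then {(k-1,0)} else {(k-1,1)})"
  have finV: "finite (K2_verts k)" unfolding K2_verts_def by auto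
  have ind: "\<And>\<sigma>. \<sigma> \<in> {..k} \<Longrightarrow> card (S \<sigma>) \<le> indep_number {v\<in>K2_verts k. \<sigma> \<in> LB k v} F"
  proof -
    fix \<sigma> assume s: "\<sigma> \<in> {..k}"
    have "independent_set {v\<in>K2_verts k. \<sigma> \<in> LB k v} F (S \<sigma>)"
      unfolding independent_set_def
    proof (intro conjI ballI)
      show "S \<sigma> \<subseteq> {v \<in> K2_verts k. \<sigma> \<in> LB k v}"
        using k s unfolding S_def LB_def K2_verts_def by auto
    next
      fix u v assume "u \<in> S \<sigma>" "v \<in> S \<sigma>"
      then have "fst u = fst v" unfolding S_def by (auto split: if_splits)
      moreover have "F u v \<longrightarrow> fst u \<noteq> fst v" using sub unfolding is_subgraph_def K2_edges_def by blast
      ultimately show "\<not> F u v" by blast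
    qed
    then show "card (S \<sigma>) \<le> indep_number {v\<in>K2_verts k. \<sigma> \<in> LB k v} F"
      using finV by (intro indep_ge) auto
  qed
  have cS: "\<And>\<sigma>. card (S \<sigma>) = (if \<sigma> \<le> k-2 then 2 else 1)"
    using k unfolding S_def by auto
  have kk: "k = Suc (Suc (k-2))" using k by simp
  have "(\<Sum>\<sigma>\<in>{..k}. card (S \<sigma>)) = (\<Sum>\<sigma>\<in>{..k}. (if \<sigma> \<le> k-2 then 2 else 1))"
    using cS by simp
  also have "\<dots> = (\<Sum>\<sigma>\<in>{..k-2}. (if \<sigma> \<le> k-2 then 2 else 1)) + 2"
    by (subst kk, simp add: atMost_Suc)
  also have "\<dots> = 2 * (k-1) + 2" using k by simp
  finally have s2: "(\<Sum>\<sigma>\<in>{..k}. card (S \<sigma>)) = 2 * k" using k by simp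
  have "card (K2_verts k) = 2 * k" unfolding K2_verts_def by (simp add: card_cartesian_product)
  also have "\<dots> = (\<Sum>\<sigma>\<in>{..k}. card (S \<sigma>))" using s2 by simp
  also have "\<dots> \<le> (\<Sum>\<sigma>\<in>{..k}. indep_number {v\<in>K2_verts k. \<sigma> \<in> LB k v} F)"
    using ind by (intro sum_mono) auto
  finally show "card (K2_verts k) \<le> (\<Sum>\<sigma>\<in>(\<Union>v\<in>K2_verts k. LB k v). indep_number {v\<in>K2_verts k. \<sigma> \<in> LB k v} F)"
    using U by simp
qed

lemma good_k: "hall_good (K2_verts k) (K2_edges k) k"
  unfolding hall_good_def
proof (intro allI impI)
  fix L :: "nat \<times> nat \<Rightarrow> nat set"
  assume fin: "\<forall>v\<in>K2_verts k. finite (L v)" and cards: "\<forall>v\<in>K2_verts k. k \<le> card (L v)"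
  have "\<exists>\<psi>. (\<forall>v\<in>{0..<k} \<times> {0::nat,1}. \<psi> v \<in> L v) \<and>
             (\<forall>u\<in>{0..<k} \<times> {0::nat,1}. \<forall>w\<in>{0..<k} \<times> {0::nat,1}. fst u \<noteq> fst w \<longrightarrow> \<psi> u \<noteq> \<psi> w)"
    using fin cards unfolding K2_verts_def by (intro ert) auto
  then obtain \<psi> where \<psi>: "\<forall>v\<in>{0..<k} \<times> {0::nat,1}. \<psi> v \<in> L v"
    "\<forall>u\<in>{0..<k} \<times> {0::nat,1}. \<forall>w\<in>{0..<k} \<times> {0::nat,1}. fst u \<noteq> fst w \<longrightarrow> \<psi> u \<noteq> \<psi> w" by blast
  have "proper_L_coloring (K2_verts k) (K2_edges k) L \<psi>"
    unfolding proper_L_coloring_def using \<psi> unfolding K2_edges_def K2_verts_def by blast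
  then show "\<exists>\<psi>. proper_L_coloring (K2_verts k) (K2_edges k) L \<psi>" by blast
qed

lemma not_good:
  assumes k: "2 \<le> k" and y: "y < k"
  shows "\<not> hall_good (K2_verts k) (K2_edges k) y"
proof
  assume g: "hall_good (K2_verts k) (K2_edges k) y"
  have finL: "\<forall>v\<in>K2_verts k. finite (LB k v)" unfolding LB_def by auto
  have finV: "finite (K2_verts k)" unfolding K2_verts_def by auto
  have hc: "hall_condition (K2_verts k) (K2_edges k) (LB k)"
    by (rule hall_from_crit[OF finV LB_crit[OF k] LB_full[OF k] finL])
  have cards: "\<forall>v\<in>K2_verts k. y \<le> card (LB k v)"
  proof
    fix v assume "v \<in> K2_verts k"
    have "k - 1 \<le> card (LB k v)" using k unfolding LB_def by (auto simp: card_Diff_singleton)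
    then show "y \<le> card (LB k v)" using y by simp
  qed
  obtain \<psi> where "proper_L_coloring (K2_verts k) (K2_edges k) (LB k) \<psi>"
    using g finL hc cards unfolding hall_good_def by blast
  then show False using LB_noncol[OF k] by blast
qed

theorem theorem3:
  fixes k :: nat
  assumes "2 \<le> k"
  shows "hall_number (K2_verts k) (K2_edges k) = k"
  unfolding hall_number_def
proof (rule Least_equality)
  show "0 < k \<and> hall_good (K2_verts k) (K2_edges k) k" using assms good_k by simp
next
  fix y assume "0 < y \<and> hall_good (K2_verts k) (K2_edges k) y"
  then show "k \<le> y" using not_good[OF assms] by (meson not_le)
qed


end
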